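(* For any $\alpha_1\in[0,1]$, the function $\gamma\mapsto\mathcal P(\alpha_1,\gamma)$ is continuous and non-increasing on $[0,1)$. Moreover, if $\mathbf P\big(f_2(X)\le\varepsilon f_1(X)\big)>0$ for every $\varepsilon>0$, then $\lim_{\gamma\to1^-}\mathcal P(\alpha_1,\gamma)=0$.
   Context: Setup. $(\mathcal X,\mathcal U)$ is a measurable space with a $\sigma$-finite measure $\mu$; $P_1\neq P_2$ are probability measures with densities $f_1,f_2$ w.r.t. $\mu$; $p_1,p_2>0$, $p_1+p_2=1$; $\mathbf P(Y=i)=p_i$ and given $Y=i$, $X\sim P_i$; $\mathbf P_i$ denotes probability when $X\sim P_i$. A classifier is a measurable $\tilde Y(X,U)\in\{0,1,2\}$ with $U\sim\mathrm{Unif}[0,1]$ independent of $(X,Y)$; $0$ means indecision. For $\alpha_1\in[0,1]$, $\gamma\in[0,1)$: $\mathcal P(\alpha_1,\gamma):=\inf_{\tilde Y}\frac{\mathbf P_2(\tilde Y=1)}{1-\gamma}$ over all classifiers with $\mathbf P(\tilde Y=0)=\gamma$ and $\mathbf P_1(\tilde Y=2)=\alpha_1(1-\gamma)$. *)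

theory Defs
  imports "HOL-Probability.Probability"
begin

text \<open>A (randomized) classifier is a function of (X,U), with values in {0,1,2}
  (0 = indecision), measurable w.r.t. the product of the sample space and Borel sets.
  U is uniform on [0,1] and independent of (X,Y).\<close>

definition classifier :: "'a measure \<Rightarrow> ('a \<times> real \<Rightarrow> nat) \<Rightarrow> bool" where
  "classifier M Yt \<longleftrightarrow> Yt \<in> (M \<Otimes>\<^sub>M lborel) \<rightarrow>\<^sub>M count_space UNIV
      \<and> (\<forall>z \<in> space (M \<Otimes>\<^sub>M lborel). Yt z \<in> {0, 1, 2})"

definition cprob :: "'a measure \<Rightarrow> ('a \<Rightarrow> real) \<Rightarrow> ('a \<times> real \<Rightarrow> nat) \<Rightarrow> nat \<Rightarrow> real" where
  "cprob M f Yt k =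
     measure (density M (\<lambda>x. ennreal (f x)) \<Otimes>\<^sub>M uniform_measure lborel {0..1})
       {z \<in> space (M \<Otimes>\<^sub>M lborel). Yt z = k}"

definition optP :: "'a measure \<Rightarrow> real \<Rightarrow> real \<Rightarrow> ('a \<Rightarrow> real) \<Rightarrow> ('a \<Rightarrow> real)
                     \<Rightarrow> real \<Rightarrow> real \<Rightarrow> real" where
  "optP M p1 p2 f1 f2 \<alpha>1 \<gamma> =
     Inf {cprob M f2 Yt 1 / (1 - \<gamma>) | Yt.
            classifier M Yt
          \<and> p1 * cprob M f1 Yt 0 + p2 * cprob M f2 Yt 0 = \<gamma>
          \<and> cprob M f1 Yt 2 = \<alpha>1 * (1 - \<gamma>)}"

end

theory Submission
  imports Defs
begin


lemma probU: "prob_space (uniform_measure lborel {0..1::real})"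
  by (rule prob_space_uniform_measure) auto

lemma emeasure_U:
  assumes "B \<in> sets lborel"
  shows "emeasure (uniform_measure lborel {0..1::real}) B = emeasure lborel ({0..1} \<inter> B)"
  using assms by (simp add: divide_ennreal_def)

lemma lborel_0_1_half:
  assumes "B \<in> sets lborel"
  shows "emeasure lborel ({0..<1::real} \<inter> B) = emeasure lborel ({0..1} \<inter> B)"
proof (rule antisym)
  show "emeasure lborel ({0..<1::real} \<inter> B) \<le> emeasure lborel ({0..1} \<inter> B)"
    using assms by (intro emeasure_mono) auto
  have "emeasure lborel ({0..1} \<inter> B) \<le> emeasure lborel (({0..<1::real} \<inter> B) \<union> {1})"
    using assms by (intro emeasure_mono) auto
  also have "\<dots> \<le> emeasure lborel ({0..<1::real} \<inter> B) + emeasure lborel {1::real}"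
    using assms by (intro emeasure_subadditive) auto
  also have "\<dots> = emeasure lborel ({0..<1::real} \<inter> B)" by simp
  finally show "emeasure lborel ({0..1} \<inter> B) \<le> emeasure lborel ({0..<1::real} \<inter> B)" .
qed

lemma piece_slice:
  assumes B: "B \<in> sets lborel" and c: "0 \<le> c" and w: "0 < w" "c + w \<le> 1"
  shows "emeasure lborel ({0..1::real} \<inter> {u. c \<le> u \<and> u < c + w \<and> (u - c) / w \<in> B})
       = ennreal w * emeasure lborel ({0..1} \<inter> B)"
proof -
  let ?S = "{0..1::real} \<inter> {u. c \<le> u \<and> u < c + w \<and> (u - c) / w \<in> B}"
  have Sm: "?S \<in> sets borel"
  proof -
    have "(\<lambda>u. (u - c) / w) \<in> borel_measurable borel" by measurable
    then have "(\<lambda>u. (u - c) / w) -` B \<inter> space borel \<in> sets borel"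
      using B by (intro measurable_sets) auto
    moreover have "?S = {0..1} \<inter> {c..<c+w} \<inter> ((\<lambda>u. (u - c) / w) -` B \<inter> space borel)"
      by auto
    ultimately show ?thesis by auto
  qed
  have "emeasure lborel ?S = (\<integral>\<^sup>+u. indicator ?S u \<partial>lborel)"
    using Sm by simp
  also have "\<dots> = \<bar>w\<bar> * (\<integral>\<^sup>+y. indicator ?S (c + w * y) \<partial>lborel)"
    using Sm w by (intro nn_integral_real_affine) auto
  also have "(\<lambda>y. indicator ?S (c + w * y)) = (\<lambda>y. indicator ({0..<1} \<inter> B) y :: ennreal)"
  proof
    fix y
    have e: "(c + w * y - c) / w = y" using w by simp
    have "c + w * y \<in> ?S \<longleftrightarrow> y \<in> {0..<1} \<inter> B"
      using w c e by (auto simp: zero_le_mult_iff) (smt (verit) mult_le_cancel_left1 mult_nonneg_nonneg)+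
    then show "indicator ?S (c + w * y) = (indicator ({0..<1} \<inter> B) y :: ennreal)"
      by (simp add: indicator_def)
  qed
  also have "(\<integral>\<^sup>+y. indicator ({0..<1} \<inter> B) y \<partial>lborel) = emeasure lborel ({0..<1} \<inter> B)"
    using B by simp
  also have "\<dots> = emeasure lborel ({0..1} \<inter> B)" using lborel_0_1_half[OF B] .
  finally show ?thesis using w by simp
qed



lemma piece:
  fixes Ya :: "'a \<times> real \<Rightarrow> nat"
  assumes N: "prob_space N" and Ym: "Ya \<in> (N \<Otimes>\<^sub>M lborel) \<rightarrow>\<^sub>M count_space UNIV"
    and c: "0 \<le> c" and w: "0 < w" "c + w \<le> 1"
  shows "emeasure (N \<Otimes>\<^sub>M uniform_measure lborel {0..1})
           {z \<in> space (N \<Otimes>\<^sub>M lborel). c \<le> snd z \<and> snd z < c + w \<and> Ya (fst z, (snd z - c) / w) \<in> K}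
       = ennreal w * emeasure (N \<Otimes>\<^sub>M uniform_measure lborel {0..1}) {z \<in> space (N \<Otimes>\<^sub>M lborel). Ya z \<in> K}"
proof -
  let ?U = "uniform_measure lborel {0..1::real}"
  interpret U: prob_space ?U by (rule probU)
  have sets_eq: "sets (N \<Otimes>\<^sub>M ?U) = sets (N \<Otimes>\<^sub>M lborel)"
    by (rule sets_pair_measure_cong) auto
  let ?Z = "{z \<in> space (N \<Otimes>\<^sub>M lborel). Ya z \<in> K}"
  let ?S = "{z \<in> space (N \<Otimes>\<^sub>M lborel). c \<le> snd z \<and> snd z < c + w \<and> Ya (fst z, (snd z - c) / w) \<in> K}"
  have Zm: "?Z \<in> sets (N \<Otimes>\<^sub>M lborel)"
  proof -
    have "Ya -` K \<inter> space (N \<Otimes>\<^sub>M lborel) \<in> sets (N \<Otimes>\<^sub>M lborel)"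
      using Ym by (intro measurable_sets) auto
    moreover have "?Z = Ya -` K \<inter> space (N \<Otimes>\<^sub>M lborel)" by auto
    ultimately show ?thesis by simp
  qed
  have gm: "(\<lambda>z. Ya (fst z, (snd z - c) / w)) \<in> (N \<Otimes>\<^sub>M lborel) \<rightarrow>\<^sub>M count_space UNIV"
  proof -
    have "(\<lambda>z. (fst z, (snd z - c) / w)) \<in> (N \<Otimes>\<^sub>M lborel) \<rightarrow>\<^sub>M (N \<Otimes>\<^sub>M lborel)"
      by measurable
    then show ?thesis using Ym by (rule measurable_comp[unfolded comp_def])
  qed
  have Sm: "?S \<in> sets (N \<Otimes>\<^sub>M lborel)"
  proof -
    have "(\<lambda>z. Ya (fst z, (snd z - c) / w)) -` K \<inter> space (N \<Otimes>\<^sub>M lborel) \<in> sets (N \<Otimes>\<^sub>M lborel)"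
      using gm by (intro measurable_sets) auto
    moreover have "{z \<in> space (N \<Otimes>\<^sub>M lborel). c \<le> snd z \<and> snd z < c + w} \<in> sets (N \<Otimes>\<^sub>M lborel)"
      by measurable
    moreover have "?S = ((\<lambda>z. Ya (fst z, (snd z - c) / w)) -` K \<inter> space (N \<Otimes>\<^sub>M lborel))
        \<inter> {z \<in> space (N \<Otimes>\<^sub>M lborel). c \<le> snd z \<and> snd z < c + w}" by auto
    ultimately show ?thesis by simp
  qed
  have slice: "emeasure ?U (Pair x -` ?S) = ennreal w * emeasure ?U (Pair x -` ?Z)"
    if x: "x \<in> space N" for x
  proof -
    have B: "Pair x -` ?Z \<in> sets lborel" using Zm by (rule sets_Pair1)
    have S1: "Pair x -` ?S \<in> sets lborel" using Sm by (rule sets_Pair1)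
    have e: "Pair x -` ?S = {u. c \<le> u \<and> u < c + w \<and> (u - c) / w \<in> Pair x -` ?Z}"
      using x by (auto simp: space_pair_measure)
    show ?thesis
      unfolding emeasure_U[OF B] emeasure_U[OF S1] unfolding e
      by (rule piece_slice[OF _ c w]) (use B in simp)
  qed
  have "emeasure (N \<Otimes>\<^sub>M ?U) ?S = (\<integral>\<^sup>+x. emeasure ?U (Pair x -` ?S) \<partial>N)"
    using Sm sets_eq by (intro U.emeasure_pair_measure_alt) auto
  also have "\<dots> = (\<integral>\<^sup>+x. ennreal w * emeasure ?U (Pair x -` ?Z) \<partial>N)"
    by (rule nn_integral_cong) (rule slice)
  also have "\<dots> = ennreal w * (\<integral>\<^sup>+x. emeasure ?U (Pair x -` ?Z) \<partial>N)"
  proof (rule nn_integral_cmult)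
    show "(\<lambda>x. emeasure ?U (Pair x -` ?Z)) \<in> borel_measurable N"
      using Zm sets_eq by (intro U.measurable_emeasure_Pair) auto
  qed
  also have "(\<integral>\<^sup>+x. emeasure ?U (Pair x -` ?Z) \<partial>N) = emeasure (N \<Otimes>\<^sub>M ?U) ?Z"
    using Zm sets_eq by (intro U.emeasure_pair_measure_alt[symmetric]) auto
  finally show ?thesis .
qed



definition dens :: "'a measure \<Rightarrow> ('a \<Rightarrow> real) \<Rightarrow> bool" where
  "dens M f \<longleftrightarrow> f \<in> borel_measurable M \<and> (\<forall>x\<in>space M. 0 \<le> f x) \<and> integrable M f \<and> integral\<^sup>L M f = 1"

abbreviation nu :: "'a measure \<Rightarrow> ('a \<Rightarrow> real) \<Rightarrow> ('a \<times> real) measure" where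
  "nu M f \<equiv> density M (\<lambda>x. ennreal (f x)) \<Otimes>\<^sub>M uniform_measure lborel {0..1}"

definition Qm :: "'a measure \<Rightarrow> ('a \<Rightarrow> real) \<Rightarrow> ('a \<times> real \<Rightarrow> nat) \<Rightarrow> nat set \<Rightarrow> real" where
  "Qm M f Y K = measure (nu M f) {z \<in> space (M \<Otimes>\<^sub>M lborel). Y z \<in> K}"

lemma cprob_Qm: "cprob M f Y k = Qm M f Y {k}"
  by (simp add: cprob_def Qm_def)

lemma dens_prob: assumes "dens M f" shows "prob_space (density M (\<lambda>x. ennreal (f x)))"
proof (rule prob_spaceI)
  have f: "f \<in> borel_measurable M" "\<forall>x\<in>space M. 0 \<le> f x" "integrable M f" "integral\<^sup>L M f = 1"
    using assms by (auto simp: dens_def)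
  have "emeasure (density M (\<lambda>x. ennreal (f x))) (space M) = (\<integral>\<^sup>+x. ennreal (f x) \<partial>M)"
    using f by (subst emeasure_density) (auto intro!: nn_integral_cong simp: indicator_def)
  also have "\<dots> = ennreal (integral\<^sup>L M f)"
    using f by (intro nn_integral_eq_integral) auto
  finally show "emeasure (density M (\<lambda>x. ennreal (f x))) (space (density M (\<lambda>x. ennreal (f x)))) = 1"
    using f by simp
qed

lemma nu_prob: assumes "dens M f" shows "prob_space (nu M f)"
  using dens_prob[OF assms] probU by (rule prob_space_pair)

lemma sets_nu: "sets (nu M f) = sets (M \<Otimes>\<^sub>M lborel)"
  by (rule sets_pair_measure_cong) auto

lemma space_nu: "space (nu M f) = space (M \<Otimes>\<^sub>M lborel)"
  by (simp add: space_pair_measure)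

lemma sets_dl: "sets (density M g \<Otimes>\<^sub>M lborel) = sets (M \<Otimes>\<^sub>M lborel)"
  by (rule sets_pair_measure_cong) auto

lemma space_dl: "space (density M g \<Otimes>\<^sub>M lborel) = space (M \<Otimes>\<^sub>M lborel)"
  by (simp add: space_pair_measure)

lemma meas_dl: "Y \<in> (M \<Otimes>\<^sub>M lborel) \<rightarrow>\<^sub>M N \<Longrightarrow> Y \<in> (density M g \<Otimes>\<^sub>M lborel) \<rightarrow>\<^sub>M N"
  using sets_dl measurable_cong_sets by blast

lemma piece_m:
  fixes Ya :: "'a \<times> real \<Rightarrow> nat"
  assumes f: "dens M f" and Ym: "Ya \<in> (M \<Otimes>\<^sub>M lborel) \<rightarrow>\<^sub>M count_space UNIV"
    and c: "0 \<le> c" and w: "0 \<le> w" "c + w \<le> 1"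
  shows "measure (nu M f)
           {z \<in> space (M \<Otimes>\<^sub>M lborel). c \<le> snd z \<and> snd z < c + w \<and> Ya (fst z, (snd z - c) / w) \<in> K}
       = w * Qm M f Ya K"
proof (cases "w = 0")
  case True
  then have "{z \<in> space (M \<Otimes>\<^sub>M lborel). c \<le> snd z \<and> snd z < c + w \<and> Ya (fst z, (snd z - c) / w) \<in> K} = {}"
    by auto
  then show ?thesis using True by (simp only: measure_empty mult_zero_left)
next
  case False
  then have w': "0 < w" using w by simp
  have "emeasure (nu M f)
           {z \<in> space (density M (\<lambda>x. ennreal (f x)) \<Otimes>\<^sub>M lborel). c \<le> snd z \<and> snd z < c + w \<and> Ya (fst z, (snd z - c) / w) \<in> K}
       = ennreal w * emeasure (nu M f) {z \<in> space (density M (\<lambda>x. ennreal (f x)) \<Otimes>\<^sub>M lborel). Ya z \<in> K}"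
    by (rule piece[OF dens_prob[OF f] meas_dl[OF Ym] c w' w(2)])
  then show ?thesis
    unfolding Qm_def measure_def space_dl using w by (simp add: enn2real_mult)
qed

lemma piece_sets:
  fixes Ya :: "'a \<times> real \<Rightarrow> nat"
  assumes Ym: "Ya \<in> (M \<Otimes>\<^sub>M lborel) \<rightarrow>\<^sub>M count_space UNIV"
  shows "{z \<in> space (M \<Otimes>\<^sub>M lborel). c \<le> snd z \<and> snd z < c + w \<and> Ya (fst z, (snd z - c) / w) \<in> K}
          \<in> sets (M \<Otimes>\<^sub>M lborel)"
proof -
  have gm: "(\<lambda>z. Ya (fst z, (snd z - c) / w)) \<in> (M \<Otimes>\<^sub>M lborel) \<rightarrow>\<^sub>M count_space UNIV"
  proof -
    have "(\<lambda>z. (fst z, (snd z - c) / w)) \<in> (M \<Otimes>\<^sub>M lborel) \<rightarrow>\<^sub>M (M \<Otimes>\<^sub>M lborel)"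
      by measurable
    then show ?thesis using Ym by (rule measurable_comp[unfolded comp_def])
  qed
  have "(\<lambda>z. Ya (fst z, (snd z - c) / w)) -` K \<inter> space (M \<Otimes>\<^sub>M lborel) \<in> sets (M \<Otimes>\<^sub>M lborel)"
    using gm by (intro measurable_sets) auto
  moreover have "{z \<in> space (M \<Otimes>\<^sub>M lborel). c \<le> snd z \<and> snd z < c + w} \<in> sets (M \<Otimes>\<^sub>M lborel)"
    by measurable
  moreover have "{z \<in> space (M \<Otimes>\<^sub>M lborel). c \<le> snd z \<and> snd z < c + w \<and> Ya (fst z, (snd z - c) / w) \<in> K}
     = ((\<lambda>z. Ya (fst z, (snd z - c) / w)) -` K \<inter> space (M \<Otimes>\<^sub>M lborel))
        \<inter> {z \<in> space (M \<Otimes>\<^sub>M lborel). c \<le> snd z \<and> snd z < c + w}" by auto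
  ultimately show ?thesis by simp
qed

definition mix3 :: "real \<Rightarrow> real \<Rightarrow> ('a \<times> real \<Rightarrow> nat) \<Rightarrow> ('a \<times> real \<Rightarrow> nat) \<Rightarrow> ('a \<times> real \<Rightarrow> nat)
   \<Rightarrow> 'a \<times> real \<Rightarrow> nat" where
  "mix3 a b Y1 Y2 Y3 z = (if snd z < 0 + a then Y1 (fst z, (snd z - 0) / a)
      else if snd z < a + b then Y2 (fst z, (snd z - a) / b)
      else Y3 (fst z, (snd z - (a + b)) / (1 - (a + b))))"

lemma mix3_meas:
  assumes "Y1 \<in> (M \<Otimes>\<^sub>M lborel) \<rightarrow>\<^sub>M count_space UNIV"
    "Y2 \<in> (M \<Otimes>\<^sub>M lborel) \<rightarrow>\<^sub>M count_space UNIV"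
    "Y3 \<in> (M \<Otimes>\<^sub>M lborel) \<rightarrow>\<^sub>M count_space UNIV"
  shows "mix3 a b Y1 Y2 Y3 \<in> (M \<Otimes>\<^sub>M lborel) \<rightarrow>\<^sub>M count_space UNIV"
proof -
  have cm: "(\<lambda>z. Y (fst z, (snd z - c) / w)) \<in> (M \<Otimes>\<^sub>M lborel) \<rightarrow>\<^sub>M count_space UNIV"
    if Ym: "Y \<in> (M \<Otimes>\<^sub>M lborel) \<rightarrow>\<^sub>M count_space UNIV" for Y :: "'a \<times> real \<Rightarrow> nat" and c w
  proof -
    have "(\<lambda>z. (fst z, (snd z - c) / w)) \<in> (M \<Otimes>\<^sub>M lborel) \<rightarrow>\<^sub>M (M \<Otimes>\<^sub>M lborel)"
      by measurable
    then show ?thesis using Ym by (rule measurable_comp[unfolded comp_def])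
  qed
  have p: "{z \<in> space (M \<Otimes>\<^sub>M lborel). snd z < c} \<in> sets (M \<Otimes>\<^sub>M lborel)" for c :: real
    by measurable
  show ?thesis
    unfolding mix3_def[abs_def]
    by (intro measurable_If cm assms p)
qed

lemma mix3_Qm:
  assumes f: "dens M f"
    and Y: "Y1 \<in> (M \<Otimes>\<^sub>M lborel) \<rightarrow>\<^sub>M count_space UNIV"
    "Y2 \<in> (M \<Otimes>\<^sub>M lborel) \<rightarrow>\<^sub>M count_space UNIV"
    "Y3 \<in> (M \<Otimes>\<^sub>M lborel) \<rightarrow>\<^sub>M count_space UNIV"
    and ab: "0 \<le> a" "0 \<le> b" "a + b \<le> 1"
  shows "Qm M f (mix3 a b Y1 Y2 Y3) K = a * Qm M f Y1 K + b * Qm M f Y2 K + (1 - (a + b)) * Qm M f Y3 K"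
proof -
  interpret P: prob_space "nu M f" by (rule nu_prob[OF f])
  let ?Y = "mix3 a b Y1 Y2 Y3"
  have Ym: "?Y \<in> (M \<Otimes>\<^sub>M lborel) \<rightarrow>\<^sub>M count_space UNIV" by (rule mix3_meas[OF Y])
  let ?P = "\<lambda>c w Ya. {z \<in> space (M \<Otimes>\<^sub>M lborel). c \<le> snd z \<and> snd z < c + w \<and> Ya (fst z, (snd z - c) / w) \<in> K}"
  have s1: "?P 0 a Y1 \<in> sets (nu M f)" unfolding sets_nu by (rule piece_sets[OF Y(1)])
  have s2: "?P a b Y2 \<in> sets (nu M f)" unfolding sets_nu by (rule piece_sets[OF Y(2)])
  have s3: "?P (a + b) (1 - (a + b)) Y3 \<in> sets (nu M f)" unfolding sets_nu by (rule piece_sets[OF Y(3)])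
  have "Qm M f ?Y K = measure (nu M f) (?P 0 1 ?Y)"
    using piece_m[OF f Ym, of 0 1 K] by simp
  also have "?P 0 1 ?Y = ?P 0 a Y1 \<union> ?P a b Y2 \<union> ?P (a + b) (1 - (a + b)) Y3"
    using ab by (auto simp: mix3_def split: if_splits)
  also have "measure (nu M f) \<dots> = measure (nu M f) (?P 0 a Y1 \<union> ?P a b Y2) + measure (nu M f) (?P (a + b) (1 - (a + b)) Y3)"
    by (rule P.finite_measure_Union[OF sets.Un[OF s1 s2] s3]) (use ab in auto)
  also have "measure (nu M f) (?P 0 a Y1 \<union> ?P a b Y2) = measure (nu M f) (?P 0 a Y1) + measure (nu M f) (?P a b Y2)"
    by (rule P.finite_measure_Union[OF s1 s2]) auto
  finally have fin: "Qm M f ?Y K = measure (nu M f) (?P 0 a Y1) + measure (nu M f) (?P a b Y2) + measure (nu M f) (?P (a + b) (1 - (a + b)) Y3)" .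
  have e1: "measure (nu M f) (?P 0 a Y1) = a * Qm M f Y1 K"
    by (rule piece_m[OF f Y(1)]) (use ab in auto)
  have e2: "measure (nu M f) (?P a b Y2) = b * Qm M f Y2 K"
    by (rule piece_m[OF f Y(2)]) (use ab in auto)
  have e3: "measure (nu M f) (?P (a + b) (1 - (a + b)) Y3) = (1 - (a + b)) * Qm M f Y3 K"
    by (rule piece_m[OF f Y(3)]) (use ab in auto)
  show ?thesis using fin unfolding e1 e2 e3 .
qed



lemma Qm_nonneg: "0 \<le> Qm M f Y K"
  by (simp add: Qm_def)

lemma Qm_const: assumes "dens M f"
  shows "Qm M f (\<lambda>z. k) K = (if k \<in> K then 1 else 0)"
proof -
  interpret P: prob_space "nu M f" by (rule nu_prob[OF assms])
  show ?thesis
  proof (cases "k \<in> K")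
    case True
    then have "{z \<in> space (M \<Otimes>\<^sub>M lborel). k \<in> K} = space (nu M f)" by (simp add: space_nu)
    then show ?thesis using True by (simp add: Qm_def P.prob_space)
  qed (simp add: Qm_def)
qed

lemma Qm_add: assumes f: "dens M f" and Y: "Y \<in> (M \<Otimes>\<^sub>M lborel) \<rightarrow>\<^sub>M count_space UNIV"
  and KL: "K \<inter> L = {}"
  shows "Qm M f Y (K \<union> L) = Qm M f Y K + Qm M f Y L"
proof -
  interpret P: prob_space "nu M f" by (rule nu_prob[OF f])
  have m: "{z \<in> space (M \<Otimes>\<^sub>M lborel). Y z \<in> A} \<in> sets (nu M f)" for A
  proof -
    have "Y -` A \<inter> space (M \<Otimes>\<^sub>M lborel) \<in> sets (M \<Otimes>\<^sub>M lborel)"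
      using Y by (intro measurable_sets) auto
    moreover have "{z \<in> space (M \<Otimes>\<^sub>M lborel). Y z \<in> A} = Y -` A \<inter> space (M \<Otimes>\<^sub>M lborel)" by auto
    ultimately show ?thesis by (simp add: sets_nu)
  qed
  have "{z \<in> space (M \<Otimes>\<^sub>M lborel). Y z \<in> K \<union> L} =
        {z \<in> space (M \<Otimes>\<^sub>M lborel). Y z \<in> K} \<union> {z \<in> space (M \<Otimes>\<^sub>M lborel). Y z \<in> L}" by auto
  then show ?thesis unfolding Qm_def
    by (simp only:) (rule P.finite_measure_Union[OF m m], use KL in auto)
qed

lemma Qm_ind_meas:
  assumes "S \<in> sets M"
  shows "(\<lambda>z. if fst z \<in> S then 1 else 0 :: nat) \<in> (M \<Otimes>\<^sub>M lborel) \<rightarrow>\<^sub>M count_space UNIV"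
  using assms by measurable

lemma Qm_ind:
  assumes f: "dens M f" and S: "S \<in> sets M"
  shows "Qm M f (\<lambda>z. if fst z \<in> S then 1 else 0) {1} = measure (density M (\<lambda>x. ennreal (f x))) S"
proof -
  let ?U = "uniform_measure lborel {0..1::real}"
  interpret U: prob_space ?U by (rule probU)
  have "{z \<in> space (M \<Otimes>\<^sub>M lborel). (if fst z \<in> S then 1 else 0 :: nat) \<in> {1}} = S \<times> space ?U"
    using sets.sets_into_space[OF S] by (auto simp: space_pair_measure)
  moreover have "emeasure (nu M f) (S \<times> space ?U) = emeasure (density M (\<lambda>x. ennreal (f x))) S"
    using S by (subst U.emeasure_pair_measure_Times) (auto simp: U.emeasure_space_1)
  ultimately show ?thesis unfolding Qm_def measure_def by simp
qed

lemma Qm_ind0: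
  assumes f: "dens M f" and S: "S \<in> sets M"
  shows "Qm M f (\<lambda>z. if fst z \<in> S then 1 else 0) {0} = 1 - measure (density M (\<lambda>x. ennreal (f x))) S"
proof -
  have "Qm M f (\<lambda>z. if fst z \<in> S then 1 else 0) ({0} \<union> {1}) = 1"
  proof -
    have "{z \<in> space (M \<Otimes>\<^sub>M lborel). (if fst z \<in> S then 1 else 0 :: nat) \<in> {0} \<union> {1}}
        = {z \<in> space (M \<Otimes>\<^sub>M lborel). (\<lambda>z. 0::nat) z \<in> {0}}" by auto
    then show ?thesis using Qm_const[OF f, of 0 "{0}"] unfolding Qm_def by simp
  qed
  then show ?thesis
    using Qm_add[OF f Qm_ind_meas[OF S], of "{0}" "{1}"] Qm_ind[OF f S] by simp
qed

lemma Qm_comp: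
  assumes "\<And>z. z \<in> space (M \<Otimes>\<^sub>M lborel) \<Longrightarrow> g (Y z) \<in> K \<longleftrightarrow> Y z \<in> L"
  shows "Qm M f (\<lambda>z. g (Y z)) K = Qm M f Y L"
proof -
  have "{z \<in> space (M \<Otimes>\<^sub>M lborel). g (Y z) \<in> K} = {z \<in> space (M \<Otimes>\<^sub>M lborel). Y z \<in> L}"
    using assms by auto
  then show ?thesis by (simp add: Qm_def)
qed

lemma measure_dens_int:
  assumes "f \<in> borel_measurable M" "\<And>x. x \<in> space M \<Longrightarrow> 0 \<le> f x" "integrable M f" "S \<in> sets M"
  shows "measure (density M (\<lambda>x. ennreal (f x))) S = (\<integral>x. f x * indicator S x \<partial>M)"
proof -
  have "emeasure (density M (\<lambda>x. ennreal (f x))) S = (\<integral>\<^sup>+x. ennreal (f x) * indicator S x \<partial>M)"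
    using assms by (subst emeasure_density) auto
  also have "\<dots> = (\<integral>\<^sup>+x. ennreal (f x * indicator S x) \<partial>M)"
    by (rule nn_integral_cong) (simp split: split_indicator)
  also have "\<dots> = ennreal (\<integral>x. f x * indicator S x \<partial>M)"
    using assms by (intro nn_integral_eq_integral integrable_real_mult_indicator) (auto split: split_indicator)
  finally show ?thesis unfolding measure_def
    using assms by (simp add: integral_nonneg_AE split: split_indicator)
qed



definition feas where
  "feas M p1 p2 f1 f2 \<alpha>1 \<gamma> Y \<longleftrightarrow> classifier M Y \<and> p1 * cprob M f1 Y 0 + p2 * cprob M f2 Y 0 = \<gamma>
      \<and> cprob M f1 Y 2 = \<alpha>1 * (1 - \<gamma>)"

lemma optP_feas: "optP M p1 p2 f1 f2 \<alpha>1 \<gamma> = Inf {cprob M f2 Y 1 / (1 - \<gamma>) | Y. feas M p1 p2 f1 f2 \<alpha>1 \<gamma> Y}"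
  by (simp add: optP_def feas_def)

lemma class_meas: "classifier M Y \<Longrightarrow> Y \<in> (M \<Otimes>\<^sub>M lborel) \<rightarrow>\<^sub>M count_space UNIV"
  by (simp add: classifier_def)

lemma class_const: "k \<in> {0,1,2} \<Longrightarrow> classifier M (\<lambda>z. k)"
  by (simp add: classifier_def)

lemma class_ind: "S \<in> sets M \<Longrightarrow> classifier M (\<lambda>z. if fst z \<in> S then 1 else 0)"
  unfolding classifier_def using Qm_ind_meas by auto

lemma class_g: assumes "classifier M Y"
  shows "classifier M (\<lambda>z. if Y z = 0 then 1 else Y z)"
proof -
  have "(\<lambda>z. if Y z = 0 then 1 else Y z) = (\<lambda>k::nat. if k = 0 then 1 else k) \<circ> Y" by auto
  moreover have "(\<lambda>k::nat. if k = 0 then 1 else k) \<in> count_space UNIV \<rightarrow>\<^sub>M count_space UNIV" by simp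
  ultimately have "(\<lambda>z. if Y z = 0 then 1 else Y z) \<in> (M \<Otimes>\<^sub>M lborel) \<rightarrow>\<^sub>M count_space UNIV"
    using class_meas[OF assms] by (metis measurable_comp)
  then show ?thesis using assms unfolding classifier_def by auto
qed

lemma class_mix3:
  assumes "classifier M Y1" "classifier M Y2" "classifier M Y3"
  shows "classifier M (mix3 a b Y1 Y2 Y3)"
  unfolding classifier_def
proof
  show "mix3 a b Y1 Y2 Y3 \<in> M \<Otimes>\<^sub>M lborel \<rightarrow>\<^sub>M count_space UNIV"
    using assms by (intro mix3_meas class_meas)
  have v: "\<And>Y z. classifier M Y \<Longrightarrow> z \<in> space (M \<Otimes>\<^sub>M lborel) \<Longrightarrow> Y z \<in> {0,1,2}"
    unfolding classifier_def by blast
  show "\<forall>z\<in>space (M \<Otimes>\<^sub>M (lborel::real measure)). mix3 a b Y1 Y2 Y3 z \<in> {0, 1, 2}"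
  proof
    fix z :: "'a \<times> real" assume z: "z \<in> space (M \<Otimes>\<^sub>M lborel)"
    have "(fst z, u) \<in> space (M \<Otimes>\<^sub>M (lborel::real measure))" for u :: real
      using z by (auto simp: space_pair_measure)
    then show "mix3 a b Y1 Y2 Y3 z \<in> {0, 1, 2}"
      unfolding mix3_def using v[OF assms(1)] v[OF assms(2)] v[OF assms(3)] by auto
  qed
qed

lemma aux_div: "x \<noteq> 0 \<Longrightarrow> x / y * c / x = c / (y::real)"
  by (simp add: field_simps)

locale setting =
  fixes M :: "'a measure" and f1 f2 :: "'a \<Rightarrow> real" and p1 p2 \<alpha>1 :: real
  assumes d1: "dens M f1" and d2: "dens M f2"
    and p1: "p1 > 0" and p2: "p2 > 0" and p12: "p1 + p2 = 1"
    and a0: "0 \<le> \<alpha>1" and a1: "\<alpha>1 \<le> 1"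
begin

abbreviation "F \<equiv> feas M p1 p2 f1 f2 \<alpha>1"

lemma witness:
  assumes g: "0 \<le> \<gamma>" "\<gamma> < 1"
  shows "\<exists>Y. F \<gamma> Y"
proof -
  let ?Y = "mix3 \<gamma> (\<alpha>1 * (1 - \<gamma>)) (\<lambda>z. 0) (\<lambda>z. 2) (\<lambda>z. 1)"
  have ab: "0 \<le> \<gamma>" "0 \<le> \<alpha>1 * (1 - \<gamma>)" "\<gamma> + \<alpha>1 * (1 - \<gamma>) \<le> 1"
    using g a0 a1 by (auto simp: mult_le_one) (smt (verit) mult_left_le_one_le)
  have cl: "classifier M ?Y" by (intro class_mix3 class_const) auto
  have q: "Qm M f ?Y K = \<gamma> * Qm M f (\<lambda>z. 0) K + \<alpha>1 * (1 - \<gamma>) * Qm M f (\<lambda>z. 2) K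
        + (1 - (\<gamma> + \<alpha>1 * (1 - \<gamma>))) * Qm M f (\<lambda>z. 1) K" if "dens M f" for f K
    by (rule mix3_Qm[OF that _ _ _ ab]) (auto intro: class_meas class_const)
  have "cprob M f1 ?Y 0 = \<gamma>" "cprob M f2 ?Y 0 = \<gamma>" "cprob M f1 ?Y 2 = \<alpha>1 * (1 - \<gamma>)"
    unfolding cprob_Qm using q[OF d1] q[OF d2] Qm_const[OF d1] Qm_const[OF d2] by simp_all
  then have "F \<gamma> ?Y" using cl p12 unfolding feas_def by (simp add: distrib_right[symmetric])
  then show ?thesis by blast
qed

lemma mono_step:
  assumes g: "0 \<le> \<gamma>" "\<gamma> < \<gamma>'" "\<gamma>' < 1" and Ya: "F \<gamma> Ya"
  shows "\<exists>Y. F \<gamma>' Y \<and> cprob M f2 Y 1 / (1 - \<gamma>') = cprob M f2 Ya 1 / (1 - \<gamma>)"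
proof -
  define q where "q = (\<gamma>' - \<gamma>) / (1 - \<gamma>)"
  have q0: "0 \<le> q" "q \<le> 1" using g by (auto simp: q_def field_simps)
  have q1: "1 - q = (1 - \<gamma>') / (1 - \<gamma>)" using g by (simp add: q_def field_simps)
  let ?Y = "mix3 q 0 (\<lambda>z. 0) (\<lambda>z. 0) Ya"
  have cla: "classifier M Ya" using Ya by (simp add: feas_def)
  have ab: "0 \<le> q" "0 \<le> (0::real)" "q + 0 \<le> 1" using q0 by auto
  have cl: "classifier M ?Y" by (intro class_mix3 class_const cla) auto
  have q: "Qm M f ?Y K = q * Qm M f (\<lambda>z. 0) K + 0 * Qm M f (\<lambda>z. 0) K
        + (1 - (q + 0)) * Qm M f Ya K" if "dens M f" for f K
    by (rule mix3_Qm[OF that _ _ class_meas[OF cla] ab]) (auto intro: class_meas class_const)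
  have e: "cprob M f ?Y 0 = q + (1 - q) * cprob M f Ya 0"
          "cprob M f ?Y 1 = (1 - q) * cprob M f Ya 1"
          "cprob M f ?Y 2 = (1 - q) * cprob M f Ya 2" if "dens M f" for f
    unfolding cprob_Qm using q[OF that] Qm_const[OF that] by simp_all
  have y0: "p1 * cprob M f1 Ya 0 + p2 * cprob M f2 Ya 0 = \<gamma>" and y2: "cprob M f1 Ya 2 = \<alpha>1 * (1 - \<gamma>)"
    using Ya by (auto simp: feas_def)
  have "p1 * cprob M f1 ?Y 0 + p2 * cprob M f2 ?Y 0 = (p1 + p2) * q + (1 - q) * (p1 * cprob M f1 Ya 0 + p2 * cprob M f2 Ya 0)"
    unfolding e[OF d1] e[OF d2] by (simp add: algebra_simps)
  also have "\<dots> = \<gamma>'"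
  proof -
    have qq: "(1 - q) * (1 - \<gamma>) = 1 - \<gamma>'" using q1 g by simp
    have "q + (1 - q) * \<gamma> = 1 - (1 - q) * (1 - \<gamma>)" by (simp add: algebra_simps)
    then show ?thesis unfolding y0 p12 using qq by simp
  qed
  finally have c0: "p1 * cprob M f1 ?Y 0 + p2 * cprob M f2 ?Y 0 = \<gamma>'" .
  have c2: "cprob M f1 ?Y 2 = \<alpha>1 * (1 - \<gamma>')"
    unfolding e[OF d1] y2 q1 using g by (simp add: field_simps)
  have c1: "cprob M f2 ?Y 1 / (1 - \<gamma>') = cprob M f2 Ya 1 / (1 - \<gamma>)"
    unfolding e[OF d2] q1 using g aux_div[of "1 - \<gamma>'" "1 - \<gamma>"] by simp
  show ?thesis using cl c0 c2 c1 unfolding feas_def by blast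
qed

end


context setting begin

lemma Qm_empty: "Qm M f Y {} = 0" by (simp add: Qm_def)

lemma lip_step:
  assumes g: "0 \<le> \<gamma>" "\<gamma> < \<gamma>'" "\<gamma>' < 1" and Ya: "F \<gamma>' Ya"
  shows "\<exists>Y. F \<gamma> Y \<and> cprob M f2 Y 1 \<le> cprob M f2 Ya 1 + (\<gamma>' - \<gamma>) / p2"
proof -
  have g': "0 < \<gamma>'" using g by simp
  define D where "D = 1 - \<alpha>1 * (1 - \<gamma>')"
  have D: "\<alpha>1 * \<gamma>' \<le> D" "0 < D"
  proof -
    have "\<alpha>1 * (1 - \<gamma>') \<le> 1 - \<gamma>'" by (rule mult_left_le_one_le) (use a0 a1 g in auto)
    moreover have "D - \<alpha>1 * \<gamma>' = 1 - \<alpha>1" by (simp add: D_def algebra_simps)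
    ultimately show "\<alpha>1 * \<gamma>' \<le> D" "0 < D" using a1 g' unfolding D_def by linarith+
  qed
  define a where "a = \<gamma> / \<gamma>'"
  define c where "c = \<alpha>1 * (\<gamma>' - \<gamma>) / D"
  define b where "b = 1 - a - c"
  have a_ge: "0 \<le> a" using g g' by (simp add: a_def)
  have c_ge: "0 \<le> c" using g a0 D by (simp add: c_def)
  have c_le: "c \<le> (\<gamma>' - \<gamma>) / \<gamma>'"
  proof -
    have "\<alpha>1 * (\<gamma>' - \<gamma>) * \<gamma>' \<le> (\<gamma>' - \<gamma>) * D"
    proof -
      have "(\<gamma>' - \<gamma>) * (\<alpha>1 * \<gamma>') \<le> (\<gamma>' - \<gamma>) * D" by (rule mult_left_mono) (use D g in auto)
      then show ?thesis by (simp add: mult_ac)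
    qed
    then show ?thesis unfolding c_def using D(2) g' by (simp add: divide_simps)
  qed
  have a1': "1 - a = (\<gamma>' - \<gamma>) / \<gamma>'" using g' by (simp add: a_def field_simps)
  have b_ge: "0 \<le> b" using c_le a1' by (simp add: b_def)
  have b_le: "b \<le> (\<gamma>' - \<gamma>) / \<gamma>'" using c_ge a1' by (simp add: b_def)
  have ab: "0 \<le> a" "0 \<le> b" "a + b \<le> 1" using a_ge b_ge c_ge by (auto simp: b_def)
  have abc: "1 - (a + b) = c" by (simp add: b_def)
  have cla: "classifier M Ya" using Ya by (simp add: feas_def)
  let ?G = "\<lambda>z. if Ya z = 0 then 1 else Ya z"
  let ?Y = "mix3 a b Ya ?G (\<lambda>z. 2)"
  have cl: "classifier M ?Y" by (intro class_mix3 class_const cla class_g) auto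
  have q: "Qm M f ?Y K = a * Qm M f Ya K + b * Qm M f ?G K + c * Qm M f (\<lambda>z. 2) K" if "dens M f" for f K
    using mix3_Qm[OF that class_meas[OF cla] class_meas[OF class_g[OF cla]] class_meas[OF class_const] ab, of 2 K]
    unfolding abc by simp
  have G0: "Qm M f ?G {0} = 0" for f using Qm_comp[where g="\<lambda>k. if k = 0 then 1 else k" and Y=Ya and K="{0}" and L="{}" and M=M and f=f] Qm_empty by simp
  have G2: "Qm M f ?G {2} = Qm M f Ya {2}" for f using Qm_comp[where g="\<lambda>k. if k = 0 then 1 else k" and Y=Ya and K="{2}" and L="{2}" and M=M and f=f] by simp
  have G1: "Qm M f ?G {1} = Qm M f Ya {0} + Qm M f Ya {1}" if "dens M f" for f
    using Qm_comp[where g="\<lambda>k. if k = 0 then 1 else k" and Y=Ya and K="{1}" and L="{0} \<union> {1}" and M=M and f=f] Qm_add[OF that class_meas[OF cla], of "{0}" "{1}"] by auto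
  have e: "cprob M f ?Y 0 = a * cprob M f Ya 0"
          "cprob M f ?Y 1 = a * cprob M f Ya 1 + b * (cprob M f Ya 0 + cprob M f Ya 1)"
          "cprob M f ?Y 2 = a * cprob M f Ya 2 + b * cprob M f Ya 2 + c" if "dens M f" for f
    unfolding cprob_Qm using q[OF that] Qm_const[OF that] G0 G1[OF that] G2 by simp_all
  have y0: "p1 * cprob M f1 Ya 0 + p2 * cprob M f2 Ya 0 = \<gamma>'" and y2: "cprob M f1 Ya 2 = \<alpha>1 * (1 - \<gamma>')"
    using Ya by (auto simp: feas_def)
  have c0: "p1 * cprob M f1 ?Y 0 + p2 * cprob M f2 ?Y 0 = \<gamma>"
  proof -
    have "p1 * cprob M f1 ?Y 0 + p2 * cprob M f2 ?Y 0 = a * (p1 * cprob M f1 Ya 0 + p2 * cprob M f2 Ya 0)"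
      unfolding e[OF d1] e[OF d2] by (simp add: algebra_simps)
    then show ?thesis unfolding y0 using g' by (simp add: a_def)
  qed
  have c2: "cprob M f1 ?Y 2 = \<alpha>1 * (1 - \<gamma>)"
  proof -
    have cD: "c * D = \<alpha>1 * (\<gamma>' - \<gamma>)" using D(2) by (simp add: c_def)
    have "cprob M f1 ?Y 2 = (1 - c) * (\<alpha>1 * (1 - \<gamma>')) + c"
      unfolding e[OF d1] y2 by (simp add: b_def algebra_simps)
    also have "\<dots> = \<alpha>1 * (1 - \<gamma>') + c * D" by (simp add: D_def algebra_simps)
    also have "\<dots> = \<alpha>1 * (1 - \<gamma>)" unfolding cD by (simp add: algebra_simps)
    finally show ?thesis .
  qed
  have c1: "cprob M f2 ?Y 1 \<le> cprob M f2 Ya 1 + (\<gamma>' - \<gamma>) / p2"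
  proof -
    have n0: "0 \<le> cprob M f2 Ya 0" "0 \<le> cprob M f2 Ya 1" "0 \<le> cprob M f1 Ya 0"
      by (simp_all add: cprob_def)
    have z: "cprob M f2 Ya 0 \<le> \<gamma>' / p2"
    proof -
      have "0 \<le> p1 * cprob M f1 Ya 0" using p1 n0 by simp
      then have "cprob M f2 Ya 0 * p2 \<le> \<gamma>'" using y0 by (simp add: mult.commute)
      then show ?thesis using p2 by (simp add: pos_le_divide_eq)
    qed
    have "cprob M f2 ?Y 1 = (a + b) * cprob M f2 Ya 1 + b * cprob M f2 Ya 0"
      unfolding e[OF d2] by (simp add: algebra_simps)
    also have "\<dots> \<le> cprob M f2 Ya 1 + b * cprob M f2 Ya 0"
      using ab n0 by (simp add: mult_left_le_one_le)
    also have "b * cprob M f2 Ya 0 \<le> ((\<gamma>' - \<gamma>) / \<gamma>') * (\<gamma>' / p2)"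
      by (rule mult_mono[OF b_le z]) (use g n0 in auto)
    also have "((\<gamma>' - \<gamma>) / \<gamma>') * (\<gamma>' / p2) = (\<gamma>' - \<gamma>) / p2" using g' by simp
    finally show ?thesis by simp
  qed
  show ?thesis using cl c0 c2 c1 unfolding feas_def by blast
qed

end


context setting begin

lemma dens_facts: assumes "dens M f"
  shows "f \<in> borel_measurable M" "\<And>x. x \<in> space M \<Longrightarrow> 0 \<le> f x" "integrable M f"
  using assms by (auto simp: dens_def)

lemma lim_step:
  assumes e: "0 < \<epsilon>"
    and m: "0 < measure (density M (\<lambda>x. ennreal (p1 * f1 x + p2 * f2 x))) {x \<in> space M. f2 x \<le> \<epsilon> * f1 x}"
    and g: "0 \<le> \<gamma>" "\<gamma> < 1"
    and gm: "1 - measure (density M (\<lambda>x. ennreal (p1 * f1 x + p2 * f2 x))) {x \<in> space M. f2 x \<le> \<epsilon> * f1 x} \<le> \<gamma>"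
  shows "\<exists>Y. F \<gamma> Y \<and> cprob M f2 Y 1 / (1 - \<gamma>) \<le> \<epsilon> / p1"
proof -
  define S where "S = {x \<in> space M. f2 x \<le> \<epsilon> * f1 x}"
  define m where "m = measure (density M (\<lambda>x. ennreal (p1 * f1 x + p2 * f2 x))) S"
  note [measurable] = dens_facts(1)[OF d1] dens_facts(1)[OF d2]
  have Sm: "S \<in> sets M" unfolding S_def by measurable
  define N1 where "N1 = measure (density M (\<lambda>x. ennreal (f1 x))) S"
  define N2 where "N2 = measure (density M (\<lambda>x. ennreal (f2 x))) S"
  have N1i: "N1 = (\<integral>x. f1 x * indicator S x \<partial>M)" unfolding N1_def
    by (rule measure_dens_int[OF dens_facts[OF d1] Sm])
  have N2i: "N2 = (\<integral>x. f2 x * indicator S x \<partial>M)" unfolding N2_def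
    by (rule measure_dens_int[OF dens_facts[OF d2] Sm])
  have i1: "integrable M (\<lambda>x. f1 x * indicator S x)"
    by (rule integrable_real_mult_indicator[OF Sm dens_facts(3)[OF d1]])
  have i2: "integrable M (\<lambda>x. f2 x * indicator S x)"
    by (rule integrable_real_mult_indicator[OF Sm dens_facts(3)[OF d2]])
  have mN: "m = p1 * N1 + p2 * N2"
  proof -
    have "m = (\<integral>x. (p1 * f1 x + p2 * f2 x) * indicator S x \<partial>M)" unfolding m_def
    proof (rule measure_dens_int[OF _ _ _ Sm])
      show "(\<lambda>x. p1 * f1 x + p2 * f2 x) \<in> borel_measurable M" by measurable
      show "0 \<le> p1 * f1 x + p2 * f2 x" if "x \<in> space M" for x
        using that dens_facts(2)[OF d1] dens_facts(2)[OF d2] p1 p2 by simp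
      show "integrable M (\<lambda>x. p1 * f1 x + p2 * f2 x)"
        using dens_facts(3)[OF d1] dens_facts(3)[OF d2] by simp
    qed
    also have "\<dots> = (\<integral>x. p1 * (f1 x * indicator S x) + p2 * (f2 x * indicator S x) \<partial>M)"
      by (simp add: algebra_simps)
    also have "\<dots> = p1 * N1 + p2 * N2"
      unfolding N1i N2i using i1 i2 by simp
    finally show ?thesis .
  qed
  have N12: "N2 \<le> \<epsilon> * N1"
  proof -
    have "N2 \<le> (\<integral>x. \<epsilon> * (f1 x * indicator S x) \<partial>M)"
      unfolding N2i using i1 i2
      by (intro integral_mono) (auto simp: S_def split: split_indicator)
    then show ?thesis unfolding N1i by simp
  qed
  have N_ge: "0 \<le> N1" "0 \<le> N2" by (simp_all add: N1_def N2_def)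
  have N_le: "N1 \<le> 1" "N2 \<le> 1"
    unfolding N1_def N2_def using prob_space.prob_le_1[OF dens_prob[OF d1]] prob_space.prob_le_1[OF dens_prob[OF d2]]
    by auto
  have m_le: "m \<le> 1"
  proof -
    have "p1 * N1 \<le> p1 * 1" by (rule mult_left_mono) (use N_le p1 in auto)
    moreover have "p2 * N2 \<le> p2 * 1" by (rule mult_left_mono) (use N_le p2 in auto)
    ultimately show ?thesis unfolding mN using p12 by linarith
  qed
  have m0: "0 < m" using m by (simp add: m_def S_def)
  have gm': "1 - \<gamma> \<le> m" using gm by (simp add: m_def S_def)
  define s where "s = \<alpha>1 * (1 - \<gamma>)"
  define t where "t = (1 - \<alpha>1) * (1 - \<gamma>) / m"
  have s_ge: "0 \<le> s" using a0 g by (simp add: s_def)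
  have t_ge: "0 \<le> t" using a1 g m0 by (simp add: t_def)
  have s_le: "s \<le> \<alpha>1" unfolding s_def by (rule mult_left_le) (use a0 g in auto)
  have t_le: "t \<le> 1 - \<alpha>1"
  proof -
    have "(1 - \<gamma>) / m \<le> 1" using gm' m0 by simp
    then have h: "(1 - \<alpha>1) * ((1 - \<gamma>) / m) \<le> 1 - \<alpha>1" by (rule mult_left_le) (use a1 in simp)
    have "t = (1 - \<alpha>1) * ((1 - \<gamma>) / m)" by (simp add: t_def)
    then show ?thesis using h by linarith
  qed
  have ab: "0 \<le> s" "0 \<le> t" "s + t \<le> 1" using s_ge t_ge s_le t_le by auto
  have tm: "t * m = (1 - \<alpha>1) * (1 - \<gamma>)" using m0 by (simp add: t_def)
  let ?I = "\<lambda>z. if fst z \<in> S then 1 else 0 :: nat"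
  let ?Y = "mix3 s t (\<lambda>z. 2) ?I (\<lambda>z. 0)"
  have cl: "classifier M ?Y" by (intro class_mix3 class_const class_ind Sm) auto
  have q: "Qm M f ?Y K = s * Qm M f (\<lambda>z. 2) K + t * Qm M f ?I K + (1 - (s + t)) * Qm M f (\<lambda>z. 0) K"
    if "dens M f" for f K
    by (rule mix3_Qm[OF that class_meas[OF class_const] class_meas[OF class_ind[OF Sm]] class_meas[OF class_const] ab]) auto
  have I2: "Qm M f ?I {2} = 0" for f
    using Qm_comp[where g="\<lambda>k. k" and Y="?I" and K="{2}" and L="{}" and M=M and f=f] Qm_empty by simp
  have e: "cprob M f ?Y 0 = t * (1 - measure (density M (\<lambda>x. ennreal (f x))) S) + (1 - (s + t))"
          "cprob M f ?Y 1 = t * measure (density M (\<lambda>x. ennreal (f x))) S"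
          "cprob M f ?Y 2 = s" if "dens M f" for f
    unfolding cprob_Qm using q[OF that] Qm_const[OF that] Qm_ind[OF that Sm] Qm_ind0[OF that Sm] I2
    by simp_all
  have c0: "p1 * cprob M f1 ?Y 0 + p2 * cprob M f2 ?Y 0 = \<gamma>"
  proof -
    have "p1 * cprob M f1 ?Y 0 + p2 * cprob M f2 ?Y 0 = (p1 + p2) * (1 - s - t) + t * (p1 + p2) - t * m"
      unfolding e[OF d1] e[OF d2] mN N1_def[symmetric] N2_def[symmetric] by (simp add: algebra_simps)
    also have "\<dots> = 1 - s - t * m" unfolding p12 by simp
    also have "\<dots> = \<gamma>" unfolding tm s_def by (simp add: algebra_simps)
    finally show ?thesis .
  qed
  have c2: "cprob M f1 ?Y 2 = \<alpha>1 * (1 - \<gamma>)" using e[OF d1] by (simp add: s_def)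
  have c1: "cprob M f2 ?Y 1 / (1 - \<gamma>) \<le> \<epsilon> / p1"
  proof -
    have "cprob M f2 ?Y 1 / (1 - \<gamma>) = (1 - \<alpha>1) * N2 / m"
    proof -
      have "t * N2 / (1 - \<gamma>) = (1 - \<alpha>1) * N2 / m" using g m0 unfolding t_def by (simp add: field_simps)
      then show ?thesis unfolding e[OF d2] N2_def[symmetric] .
    qed
    also have "\<dots> \<le> N2 / m"
    proof (rule divide_right_mono)
      show "(1 - \<alpha>1) * N2 \<le> N2" using N_ge a0 a1 by (intro mult_left_le_one_le) auto
    qed (use m0 in simp)
    also have "\<dots> \<le> \<epsilon> / p1"
    proof -
      have "p1 * N1 \<le> m" unfolding mN using p2 N_ge by simp
      then have "N1 \<le> m / p1" using p1 by (simp add: pos_le_divide_eq mult.commute)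
      then have "\<epsilon> * N1 \<le> \<epsilon> * (m / p1)" by (rule mult_left_mono) (use assms(1) in simp_all)
      then have "N2 \<le> \<epsilon> * (m / p1)" using N12 by linarith
      then show ?thesis using m0 p1 by (simp add: pos_divide_le_eq mult.commute)
    qed
    finally show ?thesis .
  qed
  show ?thesis using cl c0 c2 c1 unfolding feas_def by blast
qed

end


context setting begin

abbreviation "PP \<equiv> optP M p1 p2 f1 f2 \<alpha>1"
abbreviation "FS \<gamma> \<equiv> {cprob M f2 Y 1 / (1 - \<gamma>) | Y. F \<gamma> Y}"

lemma PP_eq: "PP \<gamma> = Inf (FS \<gamma>)" by (rule optP_feas)

lemma FS_ne: "0 \<le> \<gamma> \<Longrightarrow> \<gamma> < 1 \<Longrightarrow> FS \<gamma> \<noteq> {}"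
  using witness by blast

lemma FS_ge: "\<gamma> < 1 \<Longrightarrow> x \<in> FS \<gamma> \<Longrightarrow> 0 \<le> x"
  by (auto simp: cprob_def)

lemma FS_bdd: "\<gamma> < 1 \<Longrightarrow> bdd_below (FS \<gamma>)"
  using FS_ge by (meson bdd_below.I)

lemma PP_le: "\<gamma> < 1 \<Longrightarrow> F \<gamma> Y \<Longrightarrow> PP \<gamma> \<le> cprob M f2 Y 1 / (1 - \<gamma>)"
  unfolding PP_eq by (rule cInf_lower) (use FS_bdd in auto)

lemma PP_nonneg: "0 \<le> \<gamma> \<Longrightarrow> \<gamma> < 1 \<Longrightarrow> 0 \<le> PP \<gamma>"
  unfolding PP_eq by (rule cInf_greatest) (use FS_ne FS_ge in auto)

lemma PP_mono: assumes "0 \<le> \<gamma>" "\<gamma> \<le> \<gamma>'" "\<gamma>' < 1" shows "PP \<gamma>' \<le> PP \<gamma>"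
proof (cases "\<gamma> = \<gamma>'")
  case False
  then have lt: "\<gamma> < \<gamma>'" using assms by simp
  show ?thesis unfolding PP_eq
  proof (rule cInf_mono)
    show "FS \<gamma> \<noteq> {}" using FS_ne assms by simp
    show "bdd_below (FS \<gamma>')" using FS_bdd assms by simp
    fix b assume "b \<in> FS \<gamma>"
    then obtain Ya where b: "b = cprob M f2 Ya 1 / (1 - \<gamma>)" "F \<gamma> Ya" by blast
    obtain Y where "F \<gamma>' Y" "cprob M f2 Y 1 / (1 - \<gamma>') = cprob M f2 Ya 1 / (1 - \<gamma>)"
      using mono_step[OF assms(1) lt assms(3) b(2)] by blast
    then show "\<exists>a\<in>FS \<gamma>'. a \<le> b" using b by auto
  qed
qed simp

lemma PP_lip: assumes g: "0 \<le> \<gamma>" "\<gamma> < \<gamma>'" "\<gamma>' < 1"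
  shows "(1 - \<gamma>) * PP \<gamma> \<le> (1 - \<gamma>') * PP \<gamma>' + (\<gamma>' - \<gamma>) / p2"
proof -
  let ?d = "(\<gamma>' - \<gamma>) / p2"
  have "((1 - \<gamma>) * PP \<gamma> - ?d) / (1 - \<gamma>') \<le> PP \<gamma>'"
    unfolding PP_eq[of \<gamma>']
  proof (rule cInf_greatest)
    show "FS \<gamma>' \<noteq> {}" using FS_ne g by simp
    fix x assume "x \<in> FS \<gamma>'"
    then obtain Ya where x: "x = cprob M f2 Ya 1 / (1 - \<gamma>')" "F \<gamma>' Ya" by blast
    obtain Y where Y: "F \<gamma> Y" "cprob M f2 Y 1 \<le> cprob M f2 Ya 1 + ?d"
      using lip_step[OF g x(2)] by blast
    have "PP \<gamma> \<le> cprob M f2 Y 1 / (1 - \<gamma>)" using PP_le[OF _ Y(1)] g by simp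
    then have "(1 - \<gamma>) * PP \<gamma> \<le> cprob M f2 Y 1" using g by (simp add: field_simps)
    then have "(1 - \<gamma>) * PP \<gamma> - ?d \<le> cprob M f2 Ya 1" using Y(2) by linarith
    then show "((1 - \<gamma>) * PP \<gamma> - ?d) / (1 - \<gamma>') \<le> x" unfolding x(1)
      by (rule divide_right_mono) (use g in simp)
  qed
  then show ?thesis using g by (simp add: field_simps)
qed

lemma PP_bound: assumes "0 \<le> x" "x < 1" "0 \<le> y" "y < 1"
  shows "\<bar>PP y - PP x\<bar> \<le> \<bar>y - x\<bar> / (p2 * (1 - x))"
proof (cases "x \<le> y")
  case True
  show ?thesis
  proof (cases "x = y")
    case False
    then have lt: "x < y" using True by simp
    have m: "PP y \<le> PP x" using PP_mono assms True by simp
    have l: "(1 - x) * PP x \<le> (1 - y) * PP y + (y - x) / p2" using PP_lip[OF assms(1) lt assms(4)] .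
    have "(1 - y) * PP y \<le> (1 - x) * PP y"
      using PP_nonneg[OF assms(3,4)] True by (simp add: mult_right_mono)
    then have "(1 - x) * (PP x - PP y) \<le> (y - x) / p2" using l by (simp add: algebra_simps)
    then have "PP x - PP y \<le> (y - x) / p2 / (1 - x)" using assms
      by (subst pos_le_divide_eq) (simp_all add: mult.commute)
    moreover have "\<bar>PP y - PP x\<bar> = PP x - PP y" "\<bar>y - x\<bar> = y - x" using m lt by auto
    ultimately show ?thesis by (simp add: divide_divide_eq_left)
  qed simp
next
  case False
  then have lt: "y < x" by simp
  have m: "PP x \<le> PP y" using PP_mono assms lt by simp
  have l: "(1 - y) * PP y \<le> (1 - x) * PP x + (x - y) / p2" using PP_lip[OF assms(3) lt assms(2)] .
  have "(1 - x) * PP x \<le> (1 - y) * PP x"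
    using PP_nonneg[OF assms(1,2)] lt by (simp add: mult_right_mono)
  then have "(1 - y) * (PP y - PP x) \<le> (x - y) / p2" using l by (simp add: algebra_simps)
  then have h: "PP y - PP x \<le> (x - y) / p2 / (1 - y)" using assms
    by (subst pos_le_divide_eq) (simp_all add: mult.commute)
  have "(x - y) / p2 / (1 - y) \<le> (x - y) / p2 / (1 - x)"
    by (rule divide_left_mono) (use assms lt p2 in auto)
  moreover have "\<bar>PP y - PP x\<bar> = PP y - PP x" "\<bar>y - x\<bar> = x - y" using m lt by auto
  ultimately show ?thesis using h by (simp add: divide_divide_eq_left)
qed

lemma PP_cont: "continuous_on {0..<1} PP"
  unfolding continuous_on_iff
proof (intro ballI allI impI)
  fix x e :: real assume x: "x \<in> {0..<1}" and e: "0 < e"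
  show "\<exists>d>0. \<forall>x'\<in>{0..<1}. dist x' x < d \<longrightarrow> dist (PP x') (PP x) < e"
  proof (intro exI[of _ "e * (p2 * (1 - x))"] conjI ballI impI)
    show "0 < e * (p2 * (1 - x))" using e p2 x by simp
    fix y assume y: "y \<in> {0..<1}" and d: "dist y x < e * (p2 * (1 - x))"
    have pos: "0 < p2 * (1 - x)" using p2 x by simp
    have "dist (PP y) (PP x) \<le> \<bar>y - x\<bar> / (p2 * (1 - x))"
      using PP_bound x y by (simp add: dist_real_def)
    also have "\<dots> < e" using d pos by (simp add: dist_real_def pos_divide_less_eq)
    finally show "dist (PP y) (PP x) < e" .
  qed
qed

lemma PP_lim:
  assumes h: "\<forall>\<epsilon>>0. measure (density M (\<lambda>x. ennreal (p1 * f1 x + p2 * f2 x))) {x \<in> space M. f2 x \<le> \<epsilon> * f1 x} > 0"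
  shows "(PP \<longlongrightarrow> 0) (at_left 1)"
  unfolding tendsto_iff
proof (intro allI impI)
  fix e :: real assume e: "0 < e"
  define \<epsilon> where "\<epsilon> = e * p1 / 2"
  have ep: "0 < \<epsilon>" using e p1 by (simp add: \<epsilon>_def)
  define m where "m = measure (density M (\<lambda>x. ennreal (p1 * f1 x + p2 * f2 x))) {x \<in> space M. f2 x \<le> \<epsilon> * f1 x}"
  have m: "0 < m" using h ep by (simp add: m_def)
  have "eventually (\<lambda>x. x \<in> {max 0 (1 - m)<..<1}) (at_left (1::real))"
    by (rule eventually_at_left_real) (use m in simp)
  then show "eventually (\<lambda>x. dist (PP x) 0 < e) (at_left 1)"
  proof (rule eventually_mono)
    fix g assume g: "g \<in> {max 0 (1 - m)<..<1}"
    then have g': "0 \<le> g" "g < 1" "1 - m \<le> g" by auto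
    obtain Y where Y: "F g Y" "cprob M f2 Y 1 / (1 - g) \<le> \<epsilon> / p1"
      using lim_step[OF ep _ g'(1,2)] h ep g'(3) unfolding m_def by blast
    have "PP g \<le> \<epsilon> / p1" using PP_le[OF g'(2) Y(1)] Y(2) by linarith
    also have "\<epsilon> / p1 = e / 2" using p1 by (simp add: \<epsilon>_def)
    finally have "PP g < e" using e by linarith
    then show "dist (PP g) 0 < e" using PP_nonneg[OF g'(1,2)] by (simp add: dist_real_def)
  qed
qed

end

theorem proposition2:
  fixes M :: "'a measure" and f1 f2 :: "'a \<Rightarrow> real" and p1 p2 \<alpha>1 :: real
  assumes "sigma_finite_measure M"
    and "f1 \<in> borel_measurable M" and "\<And>x. x \<in> space M \<Longrightarrow> f1 x \<ge> 0"
    and "integrable M f1" and "integral\<^sup>L M f1 = 1"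
    and "f2 \<in> borel_measurable M" and "\<And>x. x \<in> space M \<Longrightarrow> f2 x \<ge> 0"
    and "integrable M f2" and "integral\<^sup>L M f2 = 1"
    and "density M (\<lambda>x. ennreal (f1 x)) \<noteq> density M (\<lambda>x. ennreal (f2 x))"
    and "p1 > 0" and "p2 > 0" and "p1 + p2 = 1"
    and "0 \<le> \<alpha>1" and "\<alpha>1 \<le> 1"
  shows "continuous_on {0..<1} (optP M p1 p2 f1 f2 \<alpha>1)
         \<and> (\<forall>\<gamma> \<gamma>'. 0 \<le> \<gamma> \<and> \<gamma> \<le> \<gamma>' \<and> \<gamma>' < 1 \<longrightarrow>
               optP M p1 p2 f1 f2 \<alpha>1 \<gamma>' \<le> optP M p1 p2 f1 f2 \<alpha>1 \<gamma>)
         \<and> ((\<forall>\<epsilon>>0. measure (density M (\<lambda>x. ennreal (p1 * f1 x + p2 * f2 x)))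
                          {x \<in> space M. f2 x \<le> \<epsilon> * f1 x} > 0)
             \<longrightarrow> (optP M p1 p2 f1 f2 \<alpha>1 \<longlongrightarrow> 0) (at_left 1))"
proof -
  interpret setting M f1 f2 p1 p2 \<alpha>1
    by unfold_locales (use assms in \<open>auto simp: dens_def\<close>)
  show ?thesis using PP_cont PP_mono PP_lim by blast
qed


end
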